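(* Let $Y=\{Y_t,\ t\in\mathbb{Z}\}$ be an $\mathbb{N}_0$-valued process satisfying $$Y_t\mid\mathcal{F}_{t-1}\sim p(\cdot;\lambda_t(\theta^* )),\qquad \lambda_t(\theta)=f_\theta(Y_{t-1},Y_{t-2},\dots),\qquad \lambda_t(\theta^* )=\mathbb{E}(Y_t\mid\mathcal{F}_{t-1}),$$ where $\mathcal{F}_{t-1}=\sigma(Y_{t-1},Y_{t-2},\dots)$, $p(\cdot;\lambda)$ is an unknown discrete distribution, and for each $\theta$ in a compact $\Theta\subset\mathbb{R}^d$, $f_\theta$ is a non-negative measurable function on $\mathbb{N}_0^{\mathbb{N}}$. Assume $Y$ is strictly stationary and ergodic, that $\mathbb{E}Y_t^{1+\epsilon}<C$ for all $t$ for some $C>0$, $\epsilon>1$, and that assumptions (A0)–(A7) and (A$_i(\Theta)$) for $i=0,1,2$ (stated in the context) hold. Let $(\kappa_n)$ be an increasing sequence with $\kappa_n<n$, $\kappa_n\to\infty$, $\kappa_n=o(n)$ and $$\sum_{\ell\ge1}\frac{1}{\kappa_\ell}\sum_{k\ge\ell}\alpha^{(i)}_k<\infty\quad\text{for } i=0,1,2.$$ Then $$\frac{1}{\kappa_n}\sup_{\theta\in\Theta}\big|\widehat L_n(\theta)-L_n(\theta)\big|\longrightarrow0\quad\text{almost surely as } n\to\infty.$$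
   Context: Models: a model $m$ is a subset of $\{1,\dots,d\}$, $|m|$ its cardinality, $\Theta(m)=\{\theta\in\Theta:\theta_i=0\ \forall i\notin m\}$; $\mathcal{M}$ is a finite family of models containing the true model $m^*$ with $\theta^*\in\Theta(m^* )$. Define $\ell_t(\theta)=Y_t\log\lambda_t(\theta)-\lambda_t(\theta)$, $L_n(\theta)=\sum_{t=1}^n\ell_t(\theta)$, $\widehat\lambda_t(\theta)=f_\theta(Y_{t-1},\dots,Y_1,0,0,\dots)$, $\widehat L_n(\theta)=\sum_{t=1}^n(Y_t\log\widehat\lambda_t(\theta)-\widehat\lambda_t(\theta))$. Assumptions: (A$_i(\Theta)$), $i=0,1,2$: for every $y\in\mathbb{N}_0^{\mathbb{N}}$, $\theta\mapsto f_\theta(y)$ is $i$ times continuously differentiable on $\Theta$ and there is a non-negative sequence $(\alpha^{(i)}_k)_{k\ge1}$ with $\sum_k\alpha^{(0)}_k<1$ (for $i=0$), resp. $\sum_k\alpha^{(i)}_k<\infty$ (for $i=1,2$), such that $\sup_{\theta\in\Theta}\|\partial^if_\theta(y)/\partial\theta^i-\partial^if_\theta(y')/\partial\theta^i\|\le\sum_{k\ge1}\alpha^{(i)}_k|y_k-y'_k|$ for all $y,y'$. (A0) if $f_\theta(Y_{t-1},\dots)=f_{\theta'}(Y_{t-1},\dots)$ a.s. for some $t$ then $\theta=\theta'$; and $\inf_{\theta\in\Theta}f_\theta(y)\ge\underline{c}>0$ for all $y$. (A1) $\theta^*$ is an interior point of $\Theta(m^* )$. (A2) $\theta\mapsto f_\theta(y)$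 is twice continuously differentiable on $\Theta$ for every $y$. (A3) $a_t\to0$ and $Y_ta_t\to0$ as $t\to\infty$, with $a_t=\sup_{\theta\in\Theta}|\widehat\lambda_t(\theta)-\lambda_t(\theta)|$. (A4) $J(\theta^* )=\mathbb{E}\big[\lambda_t(\theta^* )^{-1}\frac{\partial\lambda_t(\theta^* )}{\partial\theta}\frac{\partial\lambda_t(\theta^* )}{\partial\theta'}\big]<\infty$ and $I(\theta^* )=\mathbb{E}\big[\frac{\mathrm{Var}(Y_t\mid\mathcal{F}_{t-1})}{\lambda_t(\theta^* )^2}\frac{\partial\lambda_t(\theta^* )}{\partial\theta}\frac{\partial\lambda_t(\theta^* )}{\partial\theta'}\big]<\infty$. (A5) for $c\in\mathbb{R}^d$, $c'\frac{\partial\lambda_t(\theta^* )}{\partial\theta}=0$ a.s. implies $c=0$. (A6) there is a neighbourhood $V(\theta^* )$ of $\theta^*$ with $\mathbb{E}\big[\sup_{\theta\in V(\theta^* )}|\partial^2\ell_t(\theta)/\partial\theta_i\partial\theta_j|\big]<\infty$ for all $i,j$. (A7) $b_t$, $b_tY_t$ and $a_td_tY_t$ are $O(t^{-h})$ for some $h>1/2$, where $b_t=\sup_{\theta\in\Theta}\mathbb{E}\big\|\frac{\partial\widehat\lambda_t(\theta)}{\partial\theta}-\frac{\partial\lambda_t(\theta)}{\partial\theta}\big\|$ and $d_t=\sup_{\theta\in\Theta}\max\big\{\mathbb{E}\big\|\widehat\lambda_t(\theta)^{-1}\frac{\partial\widehat\lambda_t(\theta)}{\partial\theta}\big\|,\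 \mathbb{E}\big\|\lambda_t(\theta)^{-1}\frac{\partial\lambda_t(\theta)}{\partial\theta}\big\|\big\}$. *)

theory Defs
  imports "HOL-Probability.Probability"
begin

text \<open>Sequences are
  functions nat => nat; the entry at index k (k >= 1) is y_k, the entry at index 0
  is a dummy (irrelevant because of the Lipschitz conditions, which only involve k >= 1).\<close>
definition seqspace :: "(nat \<Rightarrow> nat) measure" where
  "seqspace = PiM UNIV (\<lambda>_. count_space UNIV)"

definition past :: "(int \<Rightarrow> 'a \<Rightarrow> nat) \<Rightarrow> int \<Rightarrow> 'a \<Rightarrow> nat \<Rightarrow> nat" where
  "past Y t \<omega> = (\<lambda>k. if k = 0 then 0 else Y (t - int k) \<omega>)"

definition trunc_past :: "(int \<Rightarrow> 'a \<Rightarrow> nat) \<Rightarrow> nat \<Rightarrow> 'a \<Rightarrow> nat \<Rightarrow> nat" where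
  "trunc_past Y t \<omega> = (\<lambda>k. if 1 \<le> k \<and> k < t then Y (int t - int k) \<omega> else 0)"

definition lam :: "('p \<Rightarrow> (nat \<Rightarrow> nat) \<Rightarrow> real) \<Rightarrow> (int \<Rightarrow> 'a \<Rightarrow> nat) \<Rightarrow> 'p \<Rightarrow> int \<Rightarrow> 'a \<Rightarrow> real" where
  "lam f Y \<theta> t \<omega> = f \<theta> (past Y t \<omega>)"

definition lamhat :: "('p \<Rightarrow> (nat \<Rightarrow> nat) \<Rightarrow> real) \<Rightarrow> (int \<Rightarrow> 'a \<Rightarrow> nat) \<Rightarrow> 'p \<Rightarrow> nat \<Rightarrow> 'a \<Rightarrow> real" where
  "lamhat f Y \<theta> t \<omega> = f \<theta> (trunc_past Y t \<omega>)"

definition Ln :: "('p \<Rightarrow> (nat \<Rightarrow> nat) \<Rightarrow> real) \<Rightarrow> (int \<Rightarrow> 'a \<Rightarrow> nat) \<Rightarrow> 'p \<Rightarrow> nat \<Rightarrow> 'a \<Rightarrow> real" where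
  "Ln f Y \<theta> n \<omega> = (\<Sum>t=1..n. real (Y (int t) \<omega>) * ln (lam f Y \<theta> (int t) \<omega>) - lam f Y \<theta> (int t) \<omega>)"

definition Lnhat :: "('p \<Rightarrow> (nat \<Rightarrow> nat) \<Rightarrow> real) \<Rightarrow> (int \<Rightarrow> 'a \<Rightarrow> nat) \<Rightarrow> 'p \<Rightarrow> nat \<Rightarrow> 'a \<Rightarrow> real" where
  "Lnhat f Y \<theta> n \<omega> = (\<Sum>t=1..n. real (Y (int t) \<omega>) * ln (lamhat f Y \<theta> t \<omega>) - lamhat f Y \<theta> t \<omega>)"

definition Fpast :: "'a measure \<Rightarrow> (int \<Rightarrow> 'a \<Rightarrow> nat) \<Rightarrow> int \<Rightarrow> 'a measure" where
  "Fpast M Y t = sigma (space M) {Y s -` A \<inter> space M | s A. s < t}"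

definition strictly_stationary :: "'a measure \<Rightarrow> (int \<Rightarrow> 'a \<Rightarrow> nat) \<Rightarrow> bool" where
  "strictly_stationary M Y \<longleftrightarrow>
     (\<forall>(n::nat) (ts::nat \<Rightarrow> int) (h::int).
        distr M (PiM {..<n} (\<lambda>_. count_space UNIV)) (\<lambda>\<omega>. \<lambda>i\<in>{..<n}. Y (ts i) \<omega>)
      = distr M (PiM {..<n} (\<lambda>_. count_space UNIV)) (\<lambda>\<omega>. \<lambda>i\<in>{..<n}. Y (ts i + h) \<omega>))"

definition ergodic_process :: "'a measure \<Rightarrow> (int \<Rightarrow> 'a \<Rightarrow> nat) \<Rightarrow> bool" where
  "ergodic_process M Y \<longleftrightarrow>
     (\<forall>A \<in> sets (PiM (UNIV::int set) (\<lambda>_. count_space (UNIV::nat set))).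
        (\<forall>x. x \<in> A \<longleftrightarrow> (\<lambda>t. x (t + 1)) \<in> A) \<longrightarrow>
        measure M {\<omega> \<in> space M. (\<lambda>t. Y t \<omega>) \<in> A} \<in> {0, 1})"

text \<open>Lipschitz-type bound: norm (g y - g y') <= sum_{k>=1} alpha_k |y_k - y'_k|
  for all y, y' (trivially true when the right-hand side is infinite).\<close>
definition seq_lipschitz :: "(nat \<Rightarrow> real) \<Rightarrow> ((nat \<Rightarrow> nat) \<Rightarrow> 'b::real_normed_vector) \<Rightarrow> bool" where
  "seq_lipschitz \<alpha> g \<longleftrightarrow>
     (\<forall>y y'. summable (\<lambda>k. \<alpha> (Suc k) * \<bar>real (y (Suc k)) - real (y' (Suc k))\<bar>) \<longrightarrow>
        norm (g y - g y') \<le> (\<Sum>k. \<alpha> (Suc k) * \<bar>real (y (Suc k)) - real (y' (Suc k))\<bar>))"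

text \<open>Second partial derivative d^2 l_t(theta) / d theta_i d theta_j, where
  l_t(theta) = Y_t log lambda_t(theta) - lambda_t(theta), written in terms of the gradient Df
  and Hessian D2f of theta |-> f_theta(y).\<close>
definition ell_hess ::
  "('p \<Rightarrow> (nat \<Rightarrow> nat) \<Rightarrow> real) \<Rightarrow> ('p \<Rightarrow> (nat \<Rightarrow> nat) \<Rightarrow> real^'d) \<Rightarrow>
   ('p \<Rightarrow> (nat \<Rightarrow> nat) \<Rightarrow> real^'d^'d) \<Rightarrow> (int \<Rightarrow> 'a \<Rightarrow> nat) \<Rightarrow> 'p \<Rightarrow> int \<Rightarrow> 'a \<Rightarrow> 'd \<Rightarrow> 'd \<Rightarrow> real" where
  "ell_hess f Df D2f Y \<theta> t \<omega> i j =
     (let y = past Y t \<omega>; l = f \<theta> y; Yt = real (Y t \<omega>) in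
        (Yt / l - 1) * (D2f \<theta> y $ i $ j) - Yt / l\<^sup>2 * (Df \<theta> y $ i) * (Df \<theta> y $ j))"

end

theory Submission
  imports Defs
begin


lemma kron:
  fixes x \<kappa> :: "nat \<Rightarrow> real"
  assumes x: "\<And>l. 0 \<le> x l" and mono: "incseq \<kappa>" and pos: "\<And>n. n \<ge> 1 \<Longrightarrow> 0 < \<kappa> n"
    and inf: "filterlim \<kappa> at_top sequentially"
    and sm: "summable (\<lambda>l. x l / \<kappa> (Suc l))"
  shows "(\<lambda>n. (\<Sum>l<n. x l) / \<kappa> n) \<longlonglongrightarrow> 0"
proof (rule LIMSEQ_I)
  fix r :: real assume r: "0 < r"
  define g where "g = (\<lambda>l. x l / \<kappa> (Suc l))"
  have g0: "0 \<le> g l" for l unfolding g_def using x pos[of "Suc l"] by simp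
  obtain m where m: "\<forall>n\<ge>m. norm (\<Sum>i. g (i + n)) < r/2"
    using suminf_exist_split[of "r/2" g] r sm unfolding g_def by auto
  define S where "S = (\<Sum>l<m. x l)"
  have S0: "0 \<le> S" unfolding S_def by (simp add: sum_nonneg x)
  have "\<forall>\<^sub>F n in sequentially. \<kappa> n \<ge> 2*S/r + 1" using inf filterlim_at_top by auto
  then obtain N where N: "\<And>n. n \<ge> N \<Longrightarrow> \<kappa> n \<ge> 2*S/r + 1" by (auto simp: eventually_sequentially)
  show "\<exists>no. \<forall>n\<ge>no. norm ((\<Sum>l<n. x l) / \<kappa> n - 0) < r"
  proof (intro exI allI impI)
    fix n assume n: "max (max N m) 1 \<le> n"
    have kn: "0 < \<kappa> n" using pos n by simp
    have split: "(\<Sum>l<n. x l) = S + (\<Sum>l\<in>{m..<n}. x l)"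
      unfolding S_def using n by (metis lessThan_atLeast0 max.bounded_iff sum.atLeastLessThan_concat zero_le)
    have A: "S / \<kappa> n < r/2"
    proof -
      have "2*S/r + 1 \<le> \<kappa> n" using N n by simp
      hence "2*S + r \<le> r * \<kappa> n" using r by (simp add: field_simps)
      thus ?thesis using kn r by (simp add: field_simps)
    qed
    have "(\<Sum>l\<in>{m..<n}. x l) / \<kappa> n = (\<Sum>l\<in>{m..<n}. x l / \<kappa> n)" by (simp add: sum_divide_distrib)
    also have "\<dots> \<le> (\<Sum>l\<in>{m..<n}. g l)"
    proof (rule sum_mono)
      fix l assume l: "l \<in> {m..<n}"
      have "\<kappa> (Suc l) \<le> \<kappa> n" using mono l by (simp add: incseq_def)
      moreover have "0 < \<kappa> (Suc l)" using pos by simp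
      ultimately show "x l / \<kappa> n \<le> g l" unfolding g_def using x[of l]
        by (simp add: frac_le)
    qed
    also have "\<dots> = (\<Sum>i<n-m. g (i + m))"
      using n by (intro sum.reindex_bij_witness[of _ "\<lambda>i. i + m" "\<lambda>l. l - m"]) auto
    also have "\<dots> \<le> (\<Sum>i. g (i + m))"
      using sm unfolding g_def[symmetric]
      by (intro sum_le_suminf) (auto simp: g0 summable_iff_shift)
    also have "\<dots> < r/2" using m by auto
    finally have B: "(\<Sum>l\<in>{m..<n}. x l) / \<kappa> n < r/2" .
    have nn: "0 \<le> (\<Sum>l<n. x l) / \<kappa> n" using kn by (simp add: sum_nonneg x)
    show "norm ((\<Sum>l<n. x l) / \<kappa> n - 0) < r"
    proof -
      have "norm ((\<Sum>l<n. x l) / \<kappa> n - 0) = S / \<kappa> n + (\<Sum>l\<in>{m..<n}. x l) / \<kappa> n"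
        using nn unfolding split by (simp add: add_divide_distrib)
      thus ?thesis using A B by linarith
    qed
  qed
qed


lemma sq_le_powr:
  fixes u \<epsilon> :: real assumes u: "0 \<le> u" and e: "\<epsilon> > 1"
  shows "u\<^sup>2 \<le> 1 + u powr (1+\<epsilon>)" and "u \<le> 1 + u powr (1+\<epsilon>)"
proof -
  have P0: "0 \<le> u powr (1+\<epsilon>)" by simp
  show "u\<^sup>2 \<le> 1 + u powr (1+\<epsilon>)"
  proof (cases "u \<le> 1")
    case True
    have "u\<^sup>2 \<le> 1" using u True by (rule power_le_one)
    thus ?thesis using P0 by linarith
  next
    case False
    hence "u powr 2 \<le> u powr (1+\<epsilon>)" using e by (intro powr_mono) auto
    thus ?thesis using False by (simp add: powr_numeral)
  qed
  show "u \<le> 1 + u powr (1+\<epsilon>)"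
  proof (cases "u \<le> 1")
    case True thus ?thesis using P0 by linarith
  next
    case False
    hence "u powr 1 \<le> u powr (1+\<epsilon>)" using e by (intro powr_mono) auto
    thus ?thesis using False by simp
  qed
qed

lemma pt_bound:
  fixes a b c \<epsilon> :: real assumes a: "0 \<le> a" and b: "0 \<le> b" and c: "c > 0" and e: "\<epsilon> > 1"
  shows "(a/c + 1) * b \<le> (1/c+1) * (2 + a powr (1+\<epsilon>) + b powr (1+\<epsilon>))"
proof -
  define Q where "Q = 2 + a powr (1+\<epsilon>) + b powr (1+\<epsilon>)"
  have "0 \<le> (a-b)\<^sup>2" by simp
  hence "2*a*b \<le> a\<^sup>2 + b\<^sup>2" by (simp add: power2_diff)
  moreover have "0 \<le> a*b" using a b by simp
  ultimately have "a*b \<le> a\<^sup>2 + b\<^sup>2" by linarith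
  hence ab: "a*b \<le> Q" unfolding Q_def using sq_le_powr(1)[OF a e] sq_le_powr(1)[OF b e] by simp
  have "0 \<le> a powr (1+\<epsilon>)" by simp
  hence bb: "b \<le> Q" unfolding Q_def using sq_le_powr(2)[OF b e] by linarith
  have "(a/c + 1) * b = (a*b)/c + b" by (simp add: field_simps)
  also have "\<dots> \<le> Q/c + Q" using ab bb c by (intro add_mono divide_right_mono) auto
  also have "\<dots> = (1/c+1) * Q" by (simp add: field_simps)
  finally show ?thesis unfolding Q_def .
qed

lemma moment_bound:
  fixes M :: "'a measure" and Y :: "int \<Rightarrow> 'a \<Rightarrow> nat"
  assumes M: "prob_space M" and Ym: "\<And>t. Y t \<in> measurable M (count_space UNIV)"
    and e: "\<epsilon> > 1" and c: "c > 0"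
    and mom: "\<And>t. (\<integral>\<^sup>+\<omega>. ennreal (real (Y t \<omega>) powr (1 + \<epsilon>)) \<partial>M) < ennreal C"
  shows "(\<integral>\<^sup>+\<omega>. ennreal ((real (Y t \<omega>)/c + 1) * real (Y s \<omega>)) \<partial>M) \<le> ennreal ((1/c+1) * (2 + 2*C))"
proof -
  interpret prob_space M by fact
  have m1: "(\<lambda>\<omega>. ennreal (real (Y u \<omega>) powr (1 + \<epsilon>))) \<in> borel_measurable M" for u
    by (rule measurable_compose[OF Ym]) simp
  have C0: "0 \<le> C"
  proof (rule ccontr)
    assume "\<not> 0 \<le> C" hence "ennreal C = 0" by (simp add: ennreal_neg)
    thus False using mom[of 0] by simp
  qed
  have "(\<integral>\<^sup>+\<omega>. ennreal ((real (Y t \<omega>)/c + 1) * real (Y s \<omega>)) \<partial>M)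
     \<le> (\<integral>\<^sup>+\<omega>. ennreal (1/c+1) * (2 + ennreal (real (Y t \<omega>) powr (1 + \<epsilon>)) + ennreal (real (Y s \<omega>) powr (1 + \<epsilon>))) \<partial>M)"
  proof (rule nn_integral_mono)
    fix \<omega>
    have "ennreal ((real (Y t \<omega>)/c + 1) * real (Y s \<omega>)) \<le> ennreal ((1/c+1) * (2 + real (Y t \<omega>) powr (1+\<epsilon>) + real (Y s \<omega>) powr (1+\<epsilon>)))"
      by (rule ennreal_leI, rule pt_bound) (use c e in auto)
    also have "\<dots> = ennreal (1/c+1) * (2 + ennreal (real (Y t \<omega>) powr (1 + \<epsilon>)) + ennreal (real (Y s \<omega>) powr (1 + \<epsilon>)))"
      using c by (simp add: ennreal_mult ennreal_plus)
    finally show "ennreal ((real (Y t \<omega>)/c + 1) * real (Y s \<omega>)) \<le> \<dots>" .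
  qed
  also have "\<dots> = ennreal (1/c+1) * (2 + (\<integral>\<^sup>+\<omega>. ennreal (real (Y t \<omega>) powr (1 + \<epsilon>)) \<partial>M) + (\<integral>\<^sup>+\<omega>. ennreal (real (Y s \<omega>) powr (1 + \<epsilon>)) \<partial>M))"
    using m1 by (simp add: nn_integral_cmult nn_integral_add emeasure_space_1)
  also have "\<dots> \<le> ennreal (1/c+1) * (2 + ennreal C + ennreal C)"
    using mom[of t] mom[of s] by (intro mult_left_mono add_mono) auto
  also have "\<dots> = ennreal ((1/c+1) * (2 + 2*C))"
  proof -
    have e1: "ennreal (2 + C + C) = ennreal (2 + C) + ennreal C" by (rule ennreal_plus) (use C0 in auto)
    have e2: "ennreal (2 + C) = ennreal 2 + ennreal C" by (rule ennreal_plus) (use C0 in auto)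
    have "(2::real) + 2*C = 2 + C + C" by simp
    hence E: "ennreal (2 + 2*C) = 2 + ennreal C + ennreal C" using e1 e2 by (simp add: add.commute)
    have m: "ennreal ((1/c+1) * (2+2*C)) = ennreal (1/c+1) * ennreal (2+2*C)" by (rule ennreal_mult) (use c C0 in auto)
    show ?thesis by (simp only: m E)
  qed
  finally show ?thesis .
qed


lemma ln_diff_le:
  fixes a b c :: real assumes c: "0 < c" and a: "c \<le> a" and b: "c \<le> b"
  shows "\<bar>ln a - ln b\<bar> \<le> \<bar>a - b\<bar> / c"
proof -
  have g: "ln u - ln v \<le> \<bar>u - v\<bar> / c" if u: "c \<le> u" and v: "c \<le> v" for u v
  proof -
    have "ln (u/v) \<le> u/v - 1" using u v c by (intro ln_le_minus_one) auto
    hence "ln u - ln v \<le> (u - v)/v" using u v c by (simp add: ln_div diff_divide_distrib)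
    also have "\<dots> \<le> \<bar>u - v\<bar> / v" using v c by (intro divide_right_mono) auto
    also have "\<dots> \<le> \<bar>u - v\<bar> / c" using v c by (intro divide_left_mono) auto
    finally show ?thesis .
  qed
  show ?thesis using g[OF a b] g[OF b a] by (simp add: abs_minus_commute abs_le_iff)
qed

lemma ell_diff_le:
  fixes a b c y :: real assumes c: "0 < c" and a: "c \<le> a" and b: "c \<le> b" and y: "0 \<le> y"
  shows "\<bar>(y * ln a - a) - (y * ln b - b)\<bar> \<le> (y/c + 1) * \<bar>a - b\<bar>"
proof -
  have "\<bar>(y * ln a - a) - (y * ln b - b)\<bar> \<le> \<bar>y * (ln a - ln b)\<bar> + \<bar>a - b\<bar>"
    by (simp add: algebra_simps abs_triangle_ineq4 order_trans[OF _ abs_triangle_ineq])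
  also have "\<bar>y * (ln a - ln b)\<bar> \<le> y * (\<bar>a - b\<bar> / c)"
    using mult_left_mono[OF ln_diff_le[OF c a b] y] y by (simp add: abs_mult)
  finally show ?thesis by (simp add: algebra_simps)
qed


theorem lemma1:
  fixes M :: "'a measure"
    and Y :: "int \<Rightarrow> 'a \<Rightarrow> nat"
    and f :: "real^'d \<Rightarrow> (nat \<Rightarrow> nat) \<Rightarrow> real"
    and Df :: "real^'d \<Rightarrow> (nat \<Rightarrow> nat) \<Rightarrow> real^'d"
    and D2f :: "real^'d \<Rightarrow> (nat \<Rightarrow> nat) \<Rightarrow> real^'d^'d"
    and \<Theta> :: "(real^'d) set"
    and \<theta>s :: "real^'d"
    and Ms :: "'d set set"
    and ms :: "'d set"
    and p :: "real \<Rightarrow> nat pmf"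
    and \<epsilon> C c :: real
    and \<alpha>0 \<alpha>1 \<alpha>2 :: "nat \<Rightarrow> real"
    and \<kappa> :: "nat \<Rightarrow> real"
  assumes M: "prob_space M"
    and Y_meas: "\<And>t. Y t \<in> measurable M (count_space UNIV)"
    and cond_law: "\<And>t y. AE \<omega> in M.
         real_cond_exp M (Fpast M Y t) (\<lambda>\<omega>. indicator {y} (Y t \<omega>)) \<omega> = pmf (p (lam f Y \<theta>s t \<omega>)) y"
    and cond_mean: "\<And>t. AE \<omega> in M.
         real_cond_exp M (Fpast M Y t) (\<lambda>\<omega>. real (Y t \<omega>)) \<omega> = lam f Y \<theta>s t \<omega>"
    and \<Theta>_compact: "compact \<Theta>"
    and f_meas: "\<And>\<theta>. \<theta> \<in> \<Theta> \<Longrightarrow> f \<theta> \<in> borel_measurable seqspace"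
    and f_nonneg: "\<And>\<theta> y. \<theta> \<in> \<Theta> \<Longrightarrow> 0 \<le> f \<theta> y"
    and stat: "strictly_stationary M Y"
    and erg: "ergodic_process M Y"
    and \<epsilon>: "\<epsilon> > 1" and C: "C > 0"
    and moment: "\<And>t. (\<integral>\<^sup>+\<omega>. ennreal (real (Y t \<omega>) powr (1 + \<epsilon>)) \<partial>M) < ennreal C"
    and ms_in: "ms \<in> Ms"
    and \<theta>s_in: "\<theta>s \<in> {\<theta> \<in> \<Theta>. \<forall>i. i \<notin> ms \<longrightarrow> \<theta> $ i = 0}"
    and \<alpha>0_nonneg: "\<And>k. 0 \<le> \<alpha>0 k"
    and \<alpha>0_sum: "summable (\<lambda>k. \<alpha>0 (Suc k))" "(\<Sum>k. \<alpha>0 (Suc k)) < 1"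
    and A0_Theta: "\<And>\<theta>. \<theta> \<in> \<Theta> \<Longrightarrow> seq_lipschitz \<alpha>0 (f \<theta>)"
    and f_deriv: "\<And>y \<theta>. \<theta> \<in> \<Theta> \<Longrightarrow>
         ((\<lambda>\<theta>'. f \<theta>' y) has_derivative (\<lambda>h. Df \<theta> y \<bullet> h)) (at \<theta> within \<Theta>)"
    and Df_cont: "\<And>y. continuous_on \<Theta> (\<lambda>\<theta>. Df \<theta> y)"
    and \<alpha>1_nonneg: "\<And>k. 0 \<le> \<alpha>1 k"
    and \<alpha>1_sum: "summable (\<lambda>k. \<alpha>1 (Suc k))"
    and A1_Theta: "\<And>\<theta>. \<theta> \<in> \<Theta> \<Longrightarrow> seq_lipschitz \<alpha>1 (Df \<theta>)"
    and Df_deriv: "\<And>y \<theta>. \<theta> \<in> \<Theta> \<Longrightarrow>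
         ((\<lambda>\<theta>'. Df \<theta>' y) has_derivative (\<lambda>h. D2f \<theta> y *v h)) (at \<theta> within \<Theta>)"
    and D2f_cont: "\<And>y. continuous_on \<Theta> (\<lambda>\<theta>. D2f \<theta> y)"
    and \<alpha>2_nonneg: "\<And>k. 0 \<le> \<alpha>2 k"
    and \<alpha>2_sum: "summable (\<lambda>k. \<alpha>2 (Suc k))"
    and A2_Theta: "\<And>\<theta>. \<theta> \<in> \<Theta> \<Longrightarrow> seq_lipschitz \<alpha>2 (D2f \<theta>)"
    and A0_ident: "\<And>\<theta> \<theta>' t. \<theta> \<in> \<Theta> \<Longrightarrow> \<theta>' \<in> \<Theta> \<Longrightarrow>
         (AE \<omega> in M. f \<theta> (past Y t \<omega>) = f \<theta>' (past Y t \<omega>)) \<Longrightarrow> \<theta> = \<theta>'"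
    and c_pos: "c > 0"
    and A0_lower: "\<And>\<theta> y. \<theta> \<in> \<Theta> \<Longrightarrow> c \<le> f \<theta> y"
    and A1: "\<exists>e>0. \<forall>\<theta>. (\<forall>i. i \<notin> ms \<longrightarrow> \<theta> $ i = 0) \<and> dist \<theta> \<theta>s < e \<longrightarrow> \<theta> \<in> \<Theta>"
    and A3: "AE \<omega> in M.
         (\<lambda>t. SUP \<theta>\<in>\<Theta>. ennreal \<bar>lamhat f Y \<theta> t \<omega> - lam f Y \<theta> (int t) \<omega>\<bar>) \<longlonglongrightarrow> 0 \<and>
         (\<lambda>t. of_nat (Y (int t) \<omega>) * (SUP \<theta>\<in>\<Theta>. ennreal \<bar>lamhat f Y \<theta> t \<omega> - lam f Y \<theta> (int t) \<omega>\<bar>)) \<longlonglongrightarrow> 0"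
    and A4_J: "\<And>t i j. integrable M (\<lambda>\<omega>.
         (1 / lam f Y \<theta>s t \<omega>) * (Df \<theta>s (past Y t \<omega>) $ i) * (Df \<theta>s (past Y t \<omega>) $ j))"
    and A4_I: "\<And>t i j. integrable M (\<lambda>\<omega>.
         real_cond_exp M (Fpast M Y t) (\<lambda>\<omega>. (real (Y t \<omega>) - lam f Y \<theta>s t \<omega>)\<^sup>2) \<omega>
           / (lam f Y \<theta>s t \<omega>)\<^sup>2 * (Df \<theta>s (past Y t \<omega>) $ i) * (Df \<theta>s (past Y t \<omega>) $ j))"
    and A5: "\<And>t (v::real^'d). (AE \<omega> in M. v \<bullet> Df \<theta>s (past Y t \<omega>) = 0) \<Longrightarrow> v = 0"
    and A6: "\<exists>V. open V \<and> \<theta>s \<in> V \<and> (\<forall>t i j.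
         (\<integral>\<^sup>+\<omega>. (SUP \<theta>\<in>V \<inter> \<Theta>. ennreal \<bar>ell_hess f Df D2f Y \<theta> t \<omega> i j\<bar>) \<partial>M) < \<infinity>)"
    and A7: "\<exists>h>1/2.
         (\<exists>K. \<forall>\<^sub>F t in sequentially.
            (SUP \<theta>\<in>\<Theta>. \<integral>\<^sup>+\<omega>. ennreal (norm (Df \<theta> (trunc_past Y t \<omega>) - Df \<theta> (past Y (int t) \<omega>))) \<partial>M)
              \<le> ennreal (K * real t powr (-h))) \<and>
         (AE \<omega> in M. \<exists>K. \<forall>\<^sub>F t in sequentially.
            of_nat (Y (int t) \<omega>) *
            (SUP \<theta>\<in>\<Theta>. \<integral>\<^sup>+\<omega>'. ennreal (norm (Df \<theta> (trunc_past Y t \<omega>') - Df \<theta> (past Y (int t) \<omega>'))) \<partial>M)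
              \<le> ennreal (K * real t powr (-h))) \<and>
         (AE \<omega> in M. \<exists>K. \<forall>\<^sub>F t in sequentially.
            (SUP \<theta>\<in>\<Theta>. ennreal \<bar>lamhat f Y \<theta> t \<omega> - lam f Y \<theta> (int t) \<omega>\<bar>) *
            (SUP \<theta>\<in>\<Theta>. max
               (\<integral>\<^sup>+\<omega>'. ennreal (norm ((1 / lamhat f Y \<theta> t \<omega>') *\<^sub>R Df \<theta> (trunc_past Y t \<omega>'))) \<partial>M)
               (\<integral>\<^sup>+\<omega>'. ennreal (norm ((1 / lam f Y \<theta> (int t) \<omega>') *\<^sub>R Df \<theta> (past Y (int t) \<omega>'))) \<partial>M)) *
            of_nat (Y (int t) \<omega>)
              \<le> ennreal (K * real t powr (-h)))"
    and \<kappa>_mono: "incseq \<kappa>"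
    and \<kappa>_pos: "\<And>n. n \<ge> 1 \<Longrightarrow> 0 < \<kappa> n"
    and \<kappa>_less: "\<And>n. n \<ge> 1 \<Longrightarrow> \<kappa> n < real n"
    and \<kappa>_inf: "filterlim \<kappa> at_top sequentially"
    and \<kappa>_o: "(\<lambda>n. \<kappa> n / real n) \<longlonglongrightarrow> 0"
    and \<kappa>_sum0: "summable (\<lambda>l. (1 / \<kappa> (Suc l)) * (\<Sum>k. \<alpha>0 (k + Suc l)))"
    and \<kappa>_sum1: "summable (\<lambda>l. (1 / \<kappa> (Suc l)) * (\<Sum>k. \<alpha>1 (k + Suc l)))"
    and \<kappa>_sum2: "summable (\<lambda>l. (1 / \<kappa> (Suc l)) * (\<Sum>k. \<alpha>2 (k + Suc l)))"
  shows "AE \<omega> in M.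
     (\<lambda>n. SUP \<theta>\<in>\<Theta>. ennreal (\<bar>Lnhat f Y \<theta> n \<omega> - Ln f Y \<theta> n \<omega>\<bar> / \<kappa> n)) \<longlonglongrightarrow> 0"
  
proof -
  interpret prob_space M by (rule M)
  define K where "K = (1/c+1)*(2+2*C)"
  have K0: "0 \<le> K" using c_pos C by (simp add: K_def)
  define D where "D = (\<lambda>(t::nat) \<omega> k. \<alpha>0 (Suc k) * (if Suc k < t then 0 else real (Y (int t - int (Suc k)) \<omega>)))"
  have D0: "0 \<le> D t \<omega> k" for t \<omega> k unfolding D_def using \<alpha>0_nonneg by simp
  define a where "a = (\<lambda>l \<omega>. 1 / \<kappa> (Suc l) * (real (Y (int (Suc l)) \<omega>) / c + 1))"
  have a0: "0 < a l \<omega>" for l \<omega>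
  proof -
    have "0 < real (Y (int (Suc l)) \<omega>) / c + 1" using c_pos by (simp add: add_nonneg_pos)
    thus ?thesis unfolding a_def using \<kappa>_pos[of "Suc l"] by simp
  qed
  define T where "T = (\<lambda>l k \<omega>. a l \<omega> * D (Suc l) \<omega> k)"
  have T0: "0 \<le> T l k \<omega>" for l k \<omega> unfolding T_def using a0[of l \<omega>] D0 by simp
  define G where "G = (\<lambda>\<omega>. \<Sum>l. \<Sum>k. ennreal (T l k \<omega>))"
  have Yr[measurable]: "(\<lambda>\<omega>. real (Y u \<omega>)) \<in> borel_measurable M" for u
    by (rule measurable_compose[OF Y_meas]) simp
  have Tm[measurable]: "(\<lambda>\<omega>. ennreal (T l k \<omega>)) \<in> borel_measurable M" for l k
    unfolding T_def a_def D_def by measurable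
  have Hm: "(\<lambda>\<omega>. \<Sum>k. ennreal (T l k \<omega>)) \<in> borel_measurable M" for l
    by measurable
  have Gm: "G \<in> borel_measurable M" unfolding G_def by measurable
  have Tint: "(\<integral>\<^sup>+\<omega>. ennreal (T l k \<omega>) \<partial>M) \<le> ennreal (1 / \<kappa> (Suc l) * K * (if k < l then 0 else \<alpha>0 (Suc k)))" for l k
  proof (cases "k < l")
    case True
    hence "T l k \<omega> = 0" for \<omega> unfolding T_def D_def by simp
    thus ?thesis by simp
  next
    case False
    have kp: "0 < \<kappa> (Suc l)" using \<kappa>_pos by simp
    have n1: "0 \<le> 1 / \<kappa> (Suc l) * \<alpha>0 (Suc k)" using kp \<alpha>0_nonneg[of "Suc k"] by simp
    have eqr: "T l k \<omega> = (1 / \<kappa> (Suc l) * \<alpha>0 (Suc k)) * ((real (Y (int (Suc l)) \<omega>) / c + 1) * real (Y (int (Suc l) - int (Suc k)) \<omega>))" for \<omega>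
      unfolding T_def a_def D_def using False by simp
    have eq: "ennreal (T l k \<omega>) = ennreal (1 / \<kappa> (Suc l) * \<alpha>0 (Suc k)) * ennreal ((real (Y (int (Suc l)) \<omega>) / c + 1) * real (Y (int (Suc l) - int (Suc k)) \<omega>))" for \<omega>
      unfolding eqr by (rule ennreal_mult[OF n1]) (use c_pos in simp)
    have "(\<integral>\<^sup>+\<omega>. ennreal (T l k \<omega>) \<partial>M) = ennreal (1 / \<kappa> (Suc l) * \<alpha>0 (Suc k)) * (\<integral>\<^sup>+\<omega>. ennreal ((real (Y (int (Suc l)) \<omega>) / c + 1) * real (Y (int (Suc l) - int (Suc k)) \<omega>)) \<partial>M)"
      unfolding eq by (rule nn_integral_cmult) measurable
    also have "\<dots> \<le> ennreal (1 / \<kappa> (Suc l) * \<alpha>0 (Suc k)) * ennreal K"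
      using moment_bound[OF M Y_meas \<epsilon> c_pos moment] unfolding K_def by (intro mult_left_mono) auto
    also have "\<dots> = ennreal (1 / \<kappa> (Suc l) * K * (if k < l then 0 else \<alpha>0 (Suc k)))"
    proof -
      have "1 / \<kappa> (Suc l) * K * (if k < l then 0 else \<alpha>0 (Suc k)) = (1 / \<kappa> (Suc l) * \<alpha>0 (Suc k)) * K"
        using False by simp
      thus ?thesis by (simp only: ennreal_mult[OF n1 K0])
    qed
    finally show ?thesis .
  qed
  define S where "S = (\<lambda>l. \<Sum>j. \<alpha>0 (j + Suc l))"
  have sm: "summable (\<lambda>j. \<alpha>0 (j + Suc l))" for l
    using \<alpha>0_sum(1) summable_iff_shift[of "\<lambda>k. \<alpha>0 (Suc k)" l] by simp
  have S0: "0 \<le> S l" for l unfolding S_def by (intro suminf_nonneg sm \<alpha>0_nonneg)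
  have Ssum: "(\<lambda>k. if k < l then 0 else \<alpha>0 (Suc k)) sums S l" for l
  proof -
    define g where "g = (\<lambda>k. if k < l then 0 else \<alpha>0 (Suc k))"
    have "(\<lambda>i. g (i + l)) sums S l"
      using summable_sums[OF sm[of l]] unfolding S_def g_def by simp
    hence "g sums (S l + (\<Sum>i<l. g i))" by (simp only: sums_iff_shift)
    moreover have "(\<Sum>i<l. g i) = 0" unfolding g_def by simp
    ultimately show ?thesis unfolding g_def by simp
  qed
  have inner: "(\<Sum>k. ennreal (1 / \<kappa> (Suc l) * K * (if k < l then 0 else \<alpha>0 (Suc k)))) = ennreal (1 / \<kappa> (Suc l) * K * S l)" for l
  proof (rule suminf_ennreal_eq)
    show "0 \<le> 1 / \<kappa> (Suc l) * K * (if k < l then 0 else \<alpha>0 (Suc k))" for k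
      using \<kappa>_pos[of "Suc l"] K0 \<alpha>0_nonneg[of "Suc k"] by simp
    show "(\<lambda>k. 1 / \<kappa> (Suc l) * K * (if k < l then 0 else \<alpha>0 (Suc k))) sums (1 / \<kappa> (Suc l) * K * S l)"
      by (rule sums_mult[OF Ssum])
  qed
  have outer_sum: "summable (\<lambda>l. 1 / \<kappa> (Suc l) * K * S l)"
    using summable_mult2[OF \<kappa>_sum0, of K] unfolding S_def by (simp add: mult_ac)
  have intG: "integral\<^sup>N M G \<noteq> \<infinity>"
  proof -
    have "integral\<^sup>N M G = (\<Sum>l. \<integral>\<^sup>+\<omega>. (\<Sum>k. ennreal (T l k \<omega>)) \<partial>M)"
      unfolding G_def by (rule nn_integral_suminf[OF Hm])
    also have "\<dots> = (\<Sum>l. \<Sum>k. \<integral>\<^sup>+\<omega>. ennreal (T l k \<omega>) \<partial>M)"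
      by (simp add: nn_integral_suminf[OF Tm])
    also have "\<dots> \<le> (\<Sum>l. \<Sum>k. ennreal (1 / \<kappa> (Suc l) * K * (if k < l then 0 else \<alpha>0 (Suc k))))"
      by (intro suminf_le summableI Tint)
    also have "\<dots> = (\<Sum>l. ennreal (1 / \<kappa> (Suc l) * K * S l))" by (simp only: inner)
    also have "\<dots> < \<top>"
    proof -
      have "(\<Sum>l. ennreal (1 / \<kappa> (Suc l) * K * S l)) \<noteq> \<top>"
        by (rule ennreal_suminf_neq_top[OF outer_sum]) (use \<kappa>_pos[of "Suc _"] K0 S0 in \<open>simp add: divide_nonneg_pos\<close>)
      thus ?thesis by (simp add: top.not_eq_extremum)
    qed
    finally show ?thesis by simp
  qed
  have AEG: "AE \<omega> in M. G \<omega> \<noteq> \<infinity>" by (rule nn_integral_noteq_infinite[OF Gm intG])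
  show ?thesis using AEG
  proof eventually_elim
    fix \<omega> assume Gf: "G \<omega> \<noteq> \<infinity>"
    define H where "H l = (\<Sum>k. ennreal (T l k \<omega>))" for l
    have GH: "G \<omega> = (\<Sum>l. H l)" unfolding G_def H_def by simp
    have Hf: "H l \<noteq> \<top>" for l
    proof -
      have "(\<Sum>l. H l) < \<top>" using Gf GH by (simp add: top.not_eq_extremum)
      thus ?thesis using ennreal_suminf_lessD[of H "\<top>" l] by simp
    qed
    have Tsum: "summable (\<lambda>k. T l k \<omega>)" for l
      using summable_suminf_not_top[of "\<lambda>k. T l k \<omega>"] Hf[of l] T0 unfolding H_def by simp
    have Dsum: "summable (D (Suc l) \<omega>)" for l
      using Tsum[of l] a0[of l \<omega>] unfolding T_def by (simp add: summable_cmult_iff)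
    define x where "x l = (real (Y (int (Suc l)) \<omega>) / c + 1) * suminf (D (Suc l) \<omega>)" for l
    have x0: "0 \<le> x l" for l
      unfolding x_def using suminf_nonneg[OF Dsum D0] c_pos by simp
    have Heq: "H l = ennreal (x l / \<kappa> (Suc l))" for l
      unfolding H_def
    proof (rule suminf_ennreal_eq)
      show "0 \<le> T l k \<omega>" for k by (rule T0)
      have "(\<lambda>k. T l k \<omega>) sums (a l \<omega> * suminf (D (Suc l) \<omega>))"
        unfolding T_def by (rule sums_mult[OF summable_sums[OF Dsum]])
      moreover have "a l \<omega> * suminf (D (Suc l) \<omega>) = x l / \<kappa> (Suc l)"
        unfolding a_def x_def by simp
      ultimately show "(\<lambda>k. T l k \<omega>) sums (x l / \<kappa> (Suc l))" by simp
    qed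
    have xs: "summable (\<lambda>l. x l / \<kappa> (Suc l))"
    proof (rule summable_suminf_not_top)
      show "0 \<le> x l / \<kappa> (Suc l)" for l using x0[of l] \<kappa>_pos[of "Suc l"] by simp
      show "(\<Sum>l. ennreal (x l / \<kappa> (Suc l))) \<noteq> \<top>" using Gf GH Heq by simp
    qed
    have kr: "(\<lambda>n. (\<Sum>l<n. x l) / \<kappa> n) \<longlonglongrightarrow> 0"
      by (rule kron[OF x0 \<kappa>_mono \<kappa>_pos \<kappa>_inf xs])
    have termb: "\<bar>(real (Y (int (Suc l)) \<omega>) * ln (lamhat f Y \<theta> (Suc l) \<omega>) - lamhat f Y \<theta> (Suc l) \<omega>)
        - (real (Y (int (Suc l)) \<omega>) * ln (lam f Y \<theta> (int (Suc l)) \<omega>) - lam f Y \<theta> (int (Suc l)) \<omega>)\<bar> \<le> x l"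
      if \<theta>: "\<theta> \<in> \<Theta>" for \<theta> l
    proof -
      have l1: "c \<le> lamhat f Y \<theta> (Suc l) \<omega>" unfolding lamhat_def by (rule A0_lower[OF \<theta>])
      have l2: "c \<le> lam f Y \<theta> (int (Suc l)) \<omega>" unfolding lam_def by (rule A0_lower[OF \<theta>])
      have Deq: "\<alpha>0 (Suc k) * \<bar>real (trunc_past Y (Suc l) \<omega> (Suc k)) - real (past Y (int (Suc l)) \<omega> (Suc k))\<bar> = D (Suc l) \<omega> k" for k
        unfolding D_def trunc_past_def past_def by auto
      have Ls: "summable (\<lambda>k. \<alpha>0 (Suc k) * \<bar>real (trunc_past Y (Suc l) \<omega> (Suc k)) - real (past Y (int (Suc l)) \<omega> (Suc k))\<bar>)"
        unfolding Deq by (rule Dsum)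
      have "norm (f \<theta> (trunc_past Y (Suc l) \<omega>) - f \<theta> (past Y (int (Suc l)) \<omega>)) \<le> (\<Sum>k. \<alpha>0 (Suc k) * \<bar>real (trunc_past Y (Suc l) \<omega> (Suc k)) - real (past Y (int (Suc l)) \<omega> (Suc k))\<bar>)"
        using A0_Theta[OF \<theta>] Ls unfolding seq_lipschitz_def by blast
      hence "\<bar>lamhat f Y \<theta> (Suc l) \<omega> - lam f Y \<theta> (int (Suc l)) \<omega>\<bar> \<le> suminf (D (Suc l) \<omega>)"
        unfolding Deq lamhat_def lam_def by simp
      hence "(real (Y (int (Suc l)) \<omega>) / c + 1) * \<bar>lamhat f Y \<theta> (Suc l) \<omega> - lam f Y \<theta> (int (Suc l)) \<omega>\<bar> \<le> x l"
        unfolding x_def using c_pos by (intro mult_left_mono) (auto intro: add_nonneg_nonneg)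
      thus ?thesis using ell_diff_le[OF c_pos l1 l2, of "real (Y (int (Suc l)) \<omega>)"] by simp
    qed
    have bound: "\<bar>Lnhat f Y \<theta> n \<omega> - Ln f Y \<theta> n \<omega>\<bar> \<le> (\<Sum>l<n. x l)" if \<theta>: "\<theta> \<in> \<Theta>" for \<theta> n
    proof -
      define hl where "hl = (\<lambda>t::nat. real (Y (int t) \<omega>) * ln (lamhat f Y \<theta> t \<omega>) - lamhat f Y \<theta> t \<omega>)"
      define ll where "ll = (\<lambda>t::nat. real (Y (int t) \<omega>) * ln (lam f Y \<theta> (int t) \<omega>) - lam f Y \<theta> (int t) \<omega>)"
      have "Lnhat f Y \<theta> n \<omega> - Ln f Y \<theta> n \<omega> = sum hl {1..n} - sum ll {1..n}"
        by (simp only: Lnhat_def Ln_def hl_def ll_def)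
      also have "\<dots> = (\<Sum>l<n. hl (Suc l)) - (\<Sum>l<n. ll (Suc l))"
        by (simp only: sum_bounds_lt_plus1)
      also have "\<dots> = (\<Sum>l<n. hl (Suc l) - ll (Suc l))"
        by (rule sum_subtractf[symmetric])
      finally have "\<bar>Lnhat f Y \<theta> n \<omega> - Ln f Y \<theta> n \<omega>\<bar> = \<bar>\<Sum>l<n. hl (Suc l) - ll (Suc l)\<bar>" by (rule arg_cong)
      also have "\<dots> \<le> (\<Sum>l<n. \<bar>hl (Suc l) - ll (Suc l)\<bar>)"
        by (rule sum_abs)
      also have "\<dots> \<le> (\<Sum>l<n. x l)"
      proof (rule sum_mono)
        fix l show "\<bar>hl (Suc l) - ll (Suc l)\<bar> \<le> x l"
          unfolding hl_def ll_def by (rule termb[OF \<theta>])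
      qed
      finally show ?thesis .
    qed
    show "(\<lambda>n. SUP \<theta>\<in>\<Theta>. ennreal (\<bar>Lnhat f Y \<theta> n \<omega> - Ln f Y \<theta> n \<omega>\<bar> / \<kappa> n)) \<longlonglongrightarrow> 0"
    proof (rule tendsto_sandwich[of "\<lambda>_. 0" _ _ "\<lambda>n. ennreal ((\<Sum>l<n. x l) / \<kappa> n)"])
      show "\<forall>\<^sub>F n in sequentially. 0 \<le> (SUP \<theta>\<in>\<Theta>. ennreal (\<bar>Lnhat f Y \<theta> n \<omega> - Ln f Y \<theta> n \<omega>\<bar> / \<kappa> n))"
        by simp
      show "\<forall>\<^sub>F n in sequentially. (SUP \<theta>\<in>\<Theta>. ennreal (\<bar>Lnhat f Y \<theta> n \<omega> - Ln f Y \<theta> n \<omega>\<bar> / \<kappa> n)) \<le> ennreal ((\<Sum>l<n. x l) / \<kappa> n)"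
        using eventually_ge_at_top[of 1]
      proof eventually_elim
        case (elim n)
        have kp: "0 < \<kappa> n" using \<kappa>_pos elim by simp
        show ?case
          by (rule SUP_least, rule ennreal_leI, rule divide_right_mono[OF bound]) (use kp in auto)
      qed
      show "(\<lambda>_. 0::ennreal) \<longlonglongrightarrow> 0" by simp
      show "(\<lambda>n. ennreal ((\<Sum>l<n. x l) / \<kappa> n)) \<longlonglongrightarrow> 0"
        using tendsto_ennrealI[OF kr] by simp
    qed
  qed
qed

end
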